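(* Let $M$ be a paving matroid with $\gamma(M) = \beta(E(M))$, $|E(M)| \ge 2r(M)+2$ and $r(M) \ge 3$. Then there is a basis $B$ of $M$ such that $\gamma(M\backslash B) = \beta(E(M) - B)$ and $r(M\backslash B) = r(M)$.
   Context: A matroid $M$ of rank $r$ is a paving matroid if every circuit of $M$ has at least $r$ elements. For $\emptyset \ne X \subseteq E(M)$, $\beta(X) := |X|/r(X)$ if $r(X) \neq 0$ and $\beta(X) := \infty$ if $r(X)=0$; and $\gamma(N) := \max_{\emptyset \ne X \subseteq E(N)} \beta(X)$ for a matroid $N$ (with $\beta$ computed using the rank function of $N$). $M\backslash B$ denotes the deletion of $B$ from $M$. *)

theory Defs
  imports "HOL-Library.Extended_Real"
begin

definition matroid :: "'a set \<Rightarrow> ('a set \<Rightarrow> bool) \<Rightarrow> bool" where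
  "matroid E indep \<longleftrightarrow>
     finite E \<and> indep {} \<and>
     (\<forall>I. indep I \<longrightarrow> I \<subseteq> E) \<and>
     (\<forall>I J. indep J \<and> I \<subseteq> J \<longrightarrow> indep I) \<and>
     (\<forall>I J. indep I \<and> indep J \<and> card I < card J \<longrightarrow> (\<exists>x\<in>J - I. indep (insert x I)))"

definition rank :: "('a set \<Rightarrow> bool) \<Rightarrow> 'a set \<Rightarrow> nat" where
  "rank indep X = Max {card I | I. I \<subseteq> X \<and> indep I}"

definition circuit :: "'a set \<Rightarrow> ('a set \<Rightarrow> bool) \<Rightarrow> 'a set \<Rightarrow> bool" where
  "circuit E indep C \<longleftrightarrow> C \<subseteq> E \<and> \<not> indep C \<and> (\<forall>x\<in>C. indep (C - {x}))"

definition paving :: "'a set \<Rightarrow> ('a set \<Rightarrow> bool) \<Rightarrow> bool" where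
  "paving E indep \<longleftrightarrow> (\<forall>C. circuit E indep C \<longrightarrow> card C \<ge> rank indep E)"

definition basis :: "'a set \<Rightarrow> ('a set \<Rightarrow> bool) \<Rightarrow> 'a set \<Rightarrow> bool" where
  "basis E indep B \<longleftrightarrow> B \<subseteq> E \<and> indep B \<and> (\<forall>I. indep I \<and> B \<subseteq> I \<longrightarrow> I = B)"

text \<open>Deletion M \ B: ground set E - B, independence restricted.\<close>
definition del_indep :: "'a set \<Rightarrow> ('a set \<Rightarrow> bool) \<Rightarrow> 'a set \<Rightarrow> 'a set \<Rightarrow> bool" where
  "del_indep E indep B = (\<lambda>I. indep I \<and> I \<subseteq> E - B)"

definition beta :: "('a set \<Rightarrow> bool) \<Rightarrow> 'a set \<Rightarrow> ereal" where
  "beta indep X = (if rank indep X = 0 then \<infinity> else ereal (real (card X) / real (rank indep X)))"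

definition gamma :: "'a set \<Rightarrow> ('a set \<Rightarrow> bool) \<Rightarrow> ereal" where
  "gamma E indep = Max (beta indep ` {X. X \<subseteq> E \<and> X \<noteq> {}})"

end

theory Submission
  imports Defs
begin

lemma matroidD:
  assumes "matroid E indep"
  shows "finite E" "indep {}" "indep I \<Longrightarrow> I \<subseteq> E" "indep J \<Longrightarrow> I \<subseteq> J \<Longrightarrow> indep I"
    "indep I \<Longrightarrow> indep J \<Longrightarrow> card I < card J \<Longrightarrow> \<exists>x\<in>J - I. indep (insert x I)"
  using assms unfolding matroid_def by blast+

lemma rank_fin:
  assumes "matroid E indep" "X \<subseteq> E"
  shows "finite {card I | I. I \<subseteq> X \<and> indep I}"
proof -
  have "{card I | I. I \<subseteq> X \<and> indep I} \<subseteq> card ` Pow X" by auto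
  moreover have "finite X" using assms matroidD(1) finite_subset by blast
  ultimately show ?thesis using finite_subset by blast
qed

lemma rank_ge:
  assumes "matroid E indep" "X \<subseteq> E" "I \<subseteq> X" "indep I"
  shows "card I \<le> rank indep X"
  unfolding rank_def using assms by (intro Max_ge[OF rank_fin[OF assms(1,2)]]) auto

lemma rank_attained:
  assumes "matroid E indep" "X \<subseteq> E"
  shows "\<exists>I. I \<subseteq> X \<and> indep I \<and> card I = rank indep X"
proof -
  have ne: "{card I | I. I \<subseteq> X \<and> indep I} \<noteq> {}" using matroidD(2)[OF assms(1)] by auto
  from Max_in[OF rank_fin[OF assms] ne] show ?thesis unfolding rank_def by auto
qed

lemma paving_small_indep:
  assumes M: "matroid E indep" and P: "paving E indep" and X: "X \<subseteq> E" "card X < rank indep E"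
  shows "indep X"
proof (rule ccontr)
  assume nX: "\<not> indep X"
  obtain C where C: "C \<subseteq> X \<and> \<not> indep C" and Cmin: "\<And>D. D \<subseteq> X \<and> \<not> indep D \<Longrightarrow> card C \<le> card D"
    using ex_has_least_nat[where P="\<lambda>C. C \<subseteq> X \<and> \<not> indep C" and k=X and m=card] nX by blast
  have finX: "finite X" using M X matroidD(1) finite_subset by blast
  have "circuit E indep C"
    unfolding circuit_def
  proof (intro conjI ballI)
    show "C \<subseteq> E" using C X by blast
    show "\<not> indep C" using C by blast
    fix x assume "x \<in> C"
    have "card (C - {x}) < card C" using \<open>x \<in> C\<close> finite_subset[OF _ finX] C by (meson card_Diff1_less)
    then show "indep (C - {x})" using Cmin[of "C - {x}"] C by fastforce
  qed
  then have "card C \<ge> rank indep E" using P unfolding paving_def by blast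
  moreover have "card C \<le> card X" using C finX card_mono by blast
  ultimately show False using X by linarith
qed

lemma extend_indep:
  assumes M: "matroid E indep"
  shows "indep I \<Longrightarrow> indep B \<Longrightarrow> card I \<le> card B \<Longrightarrow> \<exists>B'. I \<subseteq> B' \<and> B' \<subseteq> I \<union> B \<and> indep B' \<and> card B' = card B"
proof (induction "card B - card I" arbitrary: I)
  case 0
  then show ?case by (intro exI[of _ I]) auto
next
  case (Suc k)
  then have lt: "card I < card B" by linarith
  then obtain x where x: "x \<in> B - I" "indep (insert x I)" using matroidD(5)[OF M] Suc.prems by blast
  have fin: "finite I" using matroidD(1,3)[OF M] Suc.prems finite_subset by blast
  have ci: "card (insert x I) = Suc (card I)" using x fin by simp
  have "k = card B - card (insert x I)" using ci Suc.hyps(2) by linarith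
  from Suc.hyps(1)[OF this x(2) Suc.prems(2)] ci lt obtain B' where
    "insert x I \<subseteq> B'" "B' \<subseteq> insert x I \<union> B" "indep B'" "card B' = card B" by auto
  then show ?case using x by (intro exI[of _ B']) auto
qed

lemma low_inter:
  assumes M: "matroid E indep" and P: "paving E indep"
   and r: "r = rank indep E"
   and X: "X \<subseteq> E" "\<forall>I. I \<subseteq> X \<and> indep I \<longrightarrow> card I < r"
   and Y: "Y \<subseteq> E" "\<forall>I. I \<subseteq> Y \<and> indep I \<longrightarrow> card I < r"
   and J: "J \<subseteq> X \<union> Y" "indep J" "card J \<ge> r" and r1: "r \<ge> 1"
  shows "card (X \<inter> Y) \<le> r - 2"
proof (rule ccontr)
  assume "\<not> ?thesis"
  then have "r - 1 \<le> card (X \<inter> Y)" by linarith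
  then obtain I where I: "I \<subseteq> X \<inter> Y" "card I = r - 1" "finite I" by (rule obtain_subset_with_card_n)
  have IE: "I \<subseteq> E" using I(1) X(1) by blast
  have "card I < r" using I(2) r1 by linarith
  then have "card I < rank indep E" unfolding r .
  then have iI: "indep I" by (rule paving_small_indep[OF M P IE])
  have "card I < card J" using I(2) J(3) r1 by linarith
  then obtain z where z: "z \<in> J - I" "indep (insert z I)" using matroidD(5)[OF M iI J(2)] by blast
  have "z \<notin> I" using z(1) by blast
  then have cz: "card (insert z I) = r" using I(2,3) r1 by simp
  have "z \<in> X \<or> z \<in> Y" using z(1) J(1) by blast
  then show False
  proof
    assume "z \<in> X" then have "insert z I \<subseteq> X" using I(1) by blast
    then have "card (insert z I) < r" using X(2) z(2) by blast
    then show False using cz by simp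
  next
    assume "z \<in> Y" then have "insert z I \<subseteq> Y" using I(1) by blast
    then have "card (insert z I) < r" using Y(2) z(2) by blast
    then show False using cz by simp
  qed
qed

lemma lin_aux: "(x::int) \<ge> y + 1 \<Longrightarrow> 2*x + R \<le> P \<Longrightarrow> y = P - N - Q + R \<Longrightarrow> D \<ge> E \<Longrightarrow> D = P - 2*N \<Longrightarrow> E = 2*Q - 2*R - 4 \<Longrightarrow> R \<ge> 3 \<Longrightarrow> False"
  by linarith

lemma arith1:
  fixes r n m :: nat
  assumes "r \<ge> 3" "n \<ge> 2*r+2" "r*m > (r-1)*(n-r)"
  shows "n \<le> 2*m"
proof (rule ccontr)
  assume "\<not> ?thesis"
  then have a: "2*int m + 1 \<le> int n" by simp
  have b0: "int ((r-1)*(n-r)) + 1 \<le> int (r*m)" using assms(3) by linarith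
  have e: "int ((r-1)*(n-r)) = (int r - 1)*(int n - int r)" using assms(1,2) by (simp add: of_nat_diff)
  have b: "int r * int m \<ge> (int r - 1)*(int n - int r) + 1" using b0 e by simp
  have c: "int r * (2*int m + 1) \<le> int r * int n" using a by (intro mult_left_mono) auto
  have d: "(int r - 2) * int n \<ge> (int r - 2) * (2*int r + 2)" using assms(1,2) by (intro mult_left_mono) auto
  have c2: "2 * (int r * int m) + int r \<le> int r * int n" using c by (simp add: algebra_simps)
  show False
    apply (rule lin_aux[of "int r * int m" "(int r - 1)*(int n - int r)" "int r" "int r*int n" "int n" "int r * int r" "(int r - 2)*int n" "(int r - 2)*(2*int r+2)"])
    using b c2 d assms(1) by (simp_all add: algebra_simps)
qed

lemma rank_del: "X \<subseteq> E - B \<Longrightarrow> rank (del_indep E indep B) X = rank indep X"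
  unfolding rank_def del_indep_def by (rule arg_cong[where f=Max]) auto

definition lowset :: "'a set \<Rightarrow> ('a set \<Rightarrow> bool) \<Rightarrow> nat \<Rightarrow> 'a set \<Rightarrow> bool" where
  "lowset E indep r X \<longleftrightarrow> X \<subseteq> E \<and> (\<forall>I. I \<subseteq> X \<and> indep I \<longrightarrow> card I < r)"

theorem proposition1:
  fixes E :: "'a set" and indep :: "'a set \<Rightarrow> bool"
  assumes "matroid E indep"
    and "paving E indep"
    and "gamma E indep = beta indep E"
    and "card E \<ge> 2 * rank indep E + 2"
    and "rank indep E \<ge> 3"
  shows "\<exists>B. basis E indep B \<and>
             gamma (E - B) (del_indep E indep B) = beta (del_indep E indep B) (E - B) \<and>
             rank (del_indep E indep B) (E - B) = rank indep E"
proof -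
  define r where "r = rank indep E"
  define n where "n = card E"
  note M = assms(1) and P = assms(2)
  have finE: "finite E" using matroidD(1)[OF M] .
  have r3: "r \<ge> 3" using assms(5) unfolding r_def .
  have n2: "n \<ge> 2*r+2" using assms(4) unfolding r_def n_def .
  have indepE: "\<And>I. indep I \<Longrightarrow> I \<subseteq> E" using matroidD(3)[OF M] by blast
  have finI: "\<And>I. indep I \<Longrightarrow> finite I" using indepE finE finite_subset by blast
  have le_r: "\<And>I. indep I \<Longrightarrow> card I \<le> r" unfolding r_def using rank_ge[OF M order_refl indepE] .
  have small: "\<And>X. X \<subseteq> E \<Longrightarrow> card X < r \<Longrightarrow> indep X" unfolding r_def by (rule paving_small_indep[OF M P])
  have subr1: "\<And>X. X \<subseteq> E \<Longrightarrow> card X \<ge> r - 1 \<Longrightarrow> r - 1 \<le> rank indep X"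
  proof -
    fix X assume X: "X \<subseteq> E" "card X \<ge> r - 1"
    obtain I where I: "I \<subseteq> X" "card I = r - 1" "finite I" by (rule obtain_subset_with_card_n[OF X(2)])
    have "indep I" using small I X r3 by auto
    then show "r - 1 \<le> rank indep X" using rank_ge[OF M X(1) I(1)] I by simp
  qed
  have lowrank: "\<And>X. lowset E indep r X \<Longrightarrow> rank indep X < r"
  proof -
    fix X assume X: "lowset E indep r X"
    have XE: "X \<subseteq> E" using X unfolding lowset_def by blast
    obtain J where J: "J \<subseteq> X" "indep J" "card J = rank indep X" using rank_attained[OF M XE] by blast
    have "card J < r" using X J(1,2) unfolding lowset_def by blast
    then show "rank indep X < r" using J(3) by simp
  qed
  have gam: "\<And>X. lowset E indep r X \<Longrightarrow> card X \<ge> r - 1 \<Longrightarrow> r * card X \<le> (r-1) * n"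
  proof -
    fix X assume X: "lowset E indep r X" "card X \<ge> r - 1"
    have XE: "X \<subseteq> E" using X unfolding lowset_def by blast
    have rk: "rank indep X = r - 1" using subr1[OF XE X(2)] lowrank[OF X(1)] by linarith
    have Xne: "X \<noteq> {}" using X(2) r3 by auto
    have fs: "finite {Y. Y \<subseteq> E \<and> Y \<noteq> {}}"
      by (rule finite_subset[of _ "Pow E"]) (use finE in auto)
    have "beta indep X \<le> Max (beta indep ` {Y. Y \<subseteq> E \<and> Y \<noteq> {}})"
      by (rule Max_ge[OF finite_imageI[OF fs]]) (use XE Xne in blast)
    then have "beta indep X \<le> beta indep E" using assms(3) unfolding gamma_def by simp
    moreover have "beta indep X = ereal (real (card X) / real (r - 1))"
      using rk r3 unfolding beta_def by simp
    moreover have "beta indep E = ereal (real n / real r)"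
      using r3 unfolding beta_def r_def n_def by simp
    ultimately have q: "real (card X) / real (r - 1) \<le> real n / real r" by simp
    have p1: "real (r - 1) > 0" "real r > 0" using r3 by auto
    have "real (card X) \<le> real n / real r * real (r - 1)"
      using q unfolding pos_divide_le_eq[OF p1(1)] .
    also have "\<dots> = real n * real (r - 1) / real r" by simp
    finally have "real (card X) * real r \<le> real n * real (r - 1)"
      unfolding pos_le_divide_eq[OF p1(2)] .
    then have "real (card X * r) \<le> real (n * (r - 1))" by simp
    then show "r * card X \<le> (r-1) * n" by (simp only: of_nat_le_iff mult.commute)
  qed
  define good where "good m \<longleftrightarrow> (\<exists>B. indep B \<and> card B = r \<and> (\<forall>X. lowset E indep r X \<longrightarrow> card (X - B) \<le> m))" for m
  obtain B0 where B0: "B0 \<subseteq> E" "indep B0" "card B0 = r" using rank_attained[OF M order_refl] unfolding r_def by blast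
  have "good n" unfolding good_def n_def
  proof (intro exI[of _ B0] conjI allI impI B0(2,3))
    fix X assume "lowset E indep r X"
    then have "X - B0 \<subseteq> E" unfolding lowset_def by blast
    then show "card (X - B0) \<le> card E" using finE card_mono by blast
  qed
  define m where "m = (LEAST m. good m)"
  have gm: "good m" using LeastI[of good n] \<open>good n\<close> m_def by simp
  have mmin: "\<And>k. good k \<Longrightarrow> m \<le> k" using Least_le m_def by blast
  obtain B where B: "indep B" "card B = r" "\<And>X. lowset E indep r X \<Longrightarrow> card (X - B) \<le> m"
    using gm good_def by blast
  have BE: "B \<subseteq> E" using indepE B by blast
  have finB: "finite B" using finI B by blast
  have cEB: "card (E - B) = n - r" using card_Diff_subset[OF finB BE] B n_def by simp
  have key: "r * m \<le> (r-1) * (n - r)"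
  proof (rule ccontr)
    assume "\<not> ?thesis"
    then have big: "r * m > (r-1)*(n-r)" by simp
    have n2m: "n \<le> 2*m" using arith1[OF r3 n2 big] .
    have m1: "m \<ge> 1" using n2m n2 by linarith
    have "\<not> good (m - 1)" using mmin m1 by force
    then have "\<exists>X0. lowset E indep r X0 \<and> \<not> card (X0 - B) \<le> m - 1"
      using B(1,2) unfolding good_def by blast
    then obtain X0 where X0: "lowset E indep r X0" "card (X0 - B) > m - 1" by (auto simp: not_le)
    then have X0m: "card (X0 - B) = m" using B(3)[OF X0(1)] by linarith
    define F where "F = {Y. lowset E indep r Y \<and> X0 \<subseteq> Y}"
    have finF: "finite F"
      by (rule finite_subset[of _ "Pow E"]) (use finE in \<open>auto simp: F_def lowset_def\<close>)
    have "X0 \<in> F" using X0(1) unfolding F_def by blast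
    then have Fne: "F \<noteq> {}" by blast
    obtain X1 where X1: "X1 \<in> F" and X1max: "\<forall>Y\<in>F. X1 \<subseteq> Y \<longrightarrow> X1 = Y"
      using finite_has_maximal[OF finF Fne] by blast
    have X1low: "lowset E indep r X1" and X01: "X0 \<subseteq> X1" using X1 unfolding F_def by auto
    have X1E: "X1 \<subseteq> E" using X1low unfolding lowset_def by blast
    have finX1: "finite X1" using X1E finE finite_subset by blast
    have "card (X0 - B) \<le> card (X1 - B)" using X01 finX1 by (intro card_mono) auto
    then have X1m: "card (X1 - B) = m" using B(3)[OF X1low] X0m by linarith
    have "(r-1)*r \<le> (r-1)*(n-r)" using n2 by (intro mult_left_mono) auto
    then have "(r-1)*r < r * m" using big by linarith
    then have "r * (r - 1) < r * m" by (metis mult.commute)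
    then have mr: "m \<ge> r - 1" by simp
    have "card (X1 - B) \<le> card X1" using finX1 by (intro card_mono) auto
    then have cX1: "card X1 \<ge> r - 1" using X1m mr by linarith
    have g1: "r * card X1 \<le> (r-1)*n" using gam[OF X1low cX1] .
    have s1: "card (X1 - B) = card X1 - card (X1 \<inter> B)" using finX1 by (intro card_Diff_subset_Int) simp
    have s2: "card (X1 \<inter> B) \<le> card X1" using finX1 by (intro card_mono) auto
    have s3: "X1 \<inter> B = B \<inter> X1" by blast
    have split: "card X1 = m + card (B \<inter> X1)" using s1 s2 s3 X1m by simp
    have e1: "(r-1)*n = (r-1)*(n-r) + (r-1)*r" using n2 by (simp add: diff_mult_distrib2)
    have "r * card X1 = r * m + r * card (B \<inter> X1)" using split by (simp add: distrib_left)
    then have "r * card (B \<inter> X1) < (r - 1) * r" using g1 big e1 by linarith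
    then have "r * card (B \<inter> X1) < r * (r - 1)" by (simp add: mult.commute)
    then have BX1: "card (B \<inter> X1) < r - 1" by simp
    have "X1 - B \<noteq> {}"
    proof
      assume "X1 - B = {}"
      then have "card (X1 - B) = 0" by (simp only: card.empty)
      then show False using X1m m1 by simp
    qed
    then obtain x where x: "x \<in> X1 - B" by blast
    define I where "I = insert x (B \<inter> X1)"
    have finBX: "finite (B \<inter> X1)" using finB by simp
    have cI: "card I \<le> card (B \<inter> X1) + 1" unfolding I_def using finBX
      by (simp add: card_insert_if)
    have IE: "I \<subseteq> E" unfolding I_def using x X1E by blast
    have "card I < r" using cI BX1 by linarith
    then have iI: "indep I" using small[OF IE] by blast
    have "card I \<le> card B" using cI BX1 B(2) by linarith
    then obtain B' where B': "I \<subseteq> B'" "B' \<subseteq> I \<union> B" "indep B'" "card B' = card B"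
      using extend_indep[OF M iI B(1)] by blast
    have finB': "finite B'" using finI B'(3) by blast
    have xB': "x \<in> B'" using B'(1) unfolding I_def by blast
    have B'sub: "B' - {x} \<subseteq> B" using B'(2) unfolding I_def by blast
    have cB'x: "card (B' - {x}) = r - 1" using xB' finB' B'(4) B(2) by simp
    have "B - B' = B - (B' - {x})" using x by blast
    moreover have "card (B - (B' - {x})) = card B - card (B' - {x})"
      using finB' B'sub by (intro card_Diff_subset) auto
    ultimately have cBB': "card (B - B') = 1" using cB'x B(2) r3 by simp
    have dec1: "\<And>X. X \<subseteq> E \<Longrightarrow> card (X - B') \<le> card (X - B) + 1"
    proof -
      fix X assume XE0: "X \<subseteq> E"
      have "X - B' \<subseteq> (X - B) \<union> (B - B')" by blast
      then have "card (X - B') \<le> card ((X - B) \<union> (B - B'))"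
        using finB XE0 finE finite_subset by (intro card_mono) auto
      also have "\<dots> \<le> card (X - B) + card (B - B')" by (rule card_Un_le)
      finally show "card (X - B') \<le> card (X - B) + 1" using cBB' by simp
    qed
    have "X1 - B' \<subseteq> (X1 - B) - {x}" using B'(1) unfolding I_def by blast
    then have "card (X1 - B') \<le> card ((X1 - B) - {x})" using finX1 by (intro card_mono) auto
    moreover have "card ((X1 - B) - {x}) = m - 1" using x X1m finX1 by simp
    ultimately have dec2: "card (X1 - B') \<le> m - 1" by simp
    have "good (m - 1)"
      unfolding good_def
    proof (intro exI[of _ B'] conjI allI impI)
      show "indep B'" using B'(3) .
      show "card B' = r" using B'(4) B(2) by simp
      fix X assume XL: "lowset E indep r X"
      show "card (X - B') \<le> m - 1"
      proof (cases "lowset E indep r (X \<union> X1)")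
        case True
        then have "X \<union> X1 \<in> F" using X01 unfolding F_def by blast
        then have "X \<union> X1 = X1" using X1max by blast
        then have "X - B' \<subseteq> X1 - B'" by blast
        then have "card (X - B') \<le> card (X1 - B')" using finX1 by (intro card_mono) auto
        then show ?thesis using dec2 by linarith
      next
        case False
        have XE: "X \<subseteq> E" using XL unfolding lowset_def by blast
        have XX1E: "X \<union> X1 \<subseteq> E" using XE X1E by blast
        have "\<exists>J. J \<subseteq> X \<union> X1 \<and> indep J \<and> \<not> card J < r"
          using False XX1E unfolding lowset_def by blast
        then obtain J where J: "J \<subseteq> X \<union> X1" "indep J" "card J \<ge> r" by (auto simp: not_less)
        have XL2: "\<forall>I. I \<subseteq> X \<and> indep I \<longrightarrow> card I < r" using XL unfolding lowset_def by blast
        have X1L2: "\<forall>I. I \<subseteq> X1 \<and> indep I \<longrightarrow> card I < r" using X1low unfolding lowset_def by blast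
        have r1: "r \<ge> 1" using r3 by simp
        have ci: "card (X \<inter> X1) \<le> r - 2"
          by (rule low_inter[OF M P r_def XE XL2 X1E X1L2 J r1])
        have finX: "finite X" using XE finE finite_subset by blast
        have "card (X - B) + card (X1 - B) = card ((X - B) \<union> (X1 - B)) + card ((X - B) \<inter> (X1 - B))"
          using finX finX1 by (intro card_Un_Int) auto
        moreover have "card ((X - B) \<union> (X1 - B)) \<le> card (E - B)"
          using XE X1E finE by (intro card_mono) auto
        moreover have "card ((X - B) \<inter> (X1 - B)) \<le> card (X \<inter> X1)"
          using finX by (intro card_mono) auto
        ultimately have "card (X - B) + m \<le> n - 2" using X1m ci n2 cEB r3 by linarith
        then show ?thesis using dec1[OF XE] n2m n2 by linarith
      qed
    qed
    then show False using mmin m1 by force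
  qed
  have basisB: "basis E indep B"
    unfolding basis_def
  proof (intro conjI allI impI BE B(1))
    fix I assume I: "indep I \<and> B \<subseteq> I"
    have fI: "finite I" using finI I by blast
    have "card I \<le> card B" using le_r I B(2) by simp
    moreover have "card B \<le> card I" using fI I by (intro card_mono) auto
    ultimately have "B = I" using card_subset_eq[OF fI] I by simp
    then show "I = B" by simp
  qed
  have EBE: "E - B \<subseteq> E" by blast
  have rEB: "rank indep (E - B) = r"
  proof (rule antisym)
    obtain J where J: "J \<subseteq> E - B" "indep J" "card J = rank indep (E - B)" using rank_attained[OF M EBE] by blast
    show "rank indep (E - B) \<le> r" using le_r[OF J(2)] J(3) by simp
    have "\<not> lowset E indep r (E - B)"
    proof
      assume L: "lowset E indep r (E - B)"
      have "card ((E - B) - B) \<le> m" using B(3)[OF L] .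
      moreover have "(E - B) - B = E - B" by blast
      ultimately have "n - r \<le> m" using cEB by simp
      then have "r * (n - r) \<le> r * m" by simp
      then have "r * (n - r) \<le> (r - 1) * (n - r)" using key by linarith
      moreover have "n - r > 0" using n2 by simp
      ultimately show False using r3 by simp
    qed
    then have "\<exists>I. I \<subseteq> E - B \<and> indep I \<and> \<not> card I < r" using EBE unfolding lowset_def by blast
    then obtain I where I: "I \<subseteq> E - B" "indep I" "\<not> card I < r" by blast
    have "card I \<le> rank indep (E - B)" using rank_ge[OF M EBE I(1,2)] .
    then show "r \<le> rank indep (E - B)" using I(3) by simp
  qed
  have bnd: "\<And>X. X \<subseteq> E - B \<Longrightarrow> X \<noteq> {} \<Longrightarrow> card X * r \<le> (n - r) * rank indep X \<and> rank indep X \<ge> 1"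
  proof -
    fix X assume X: "X \<subseteq> E - B" "X \<noteq> {}"
    have XE: "X \<subseteq> E" using X by blast
    define k where "k = rank indep X"
    obtain a where a: "a \<in> X" using X(2) by blast
    have aE: "{a} \<subseteq> E" using a XE by blast
    have "card {a} < r" using r3 by simp
    then have "indep {a}" using small[OF aE] by blast
    then have "card {a} \<le> k" using rank_ge[OF M XE, of "{a}"] a k_def by blast
    then have k1: "k \<ge> 1" by simp
    obtain J where J: "J \<subseteq> X" "indep J" "card J = rank indep X" using rank_attained[OF M XE] by blast
    have kr: "k \<le> r" using le_r[OF J(2)] J(3) k_def by simp
    have "card X * r \<le> (n - r) * k"
    proof (cases "k = r")
      case True
      have "card X \<le> card (E - B)" using X(1) finE by (intro card_mono) auto
      then have "card X \<le> n - r" using cEB by simp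
      then show ?thesis using True by simp
    next
      case False
      then have kr': "k < r" using kr by simp
      have L: "lowset E indep r X" unfolding lowset_def
      proof (intro conjI allI impI XE)
        fix I assume I: "I \<subseteq> X \<and> indep I"
        then have "card I \<le> k" using rank_ge[OF M XE] k_def by blast
        then show "card I < r" using kr' by simp
      qed
      have "X - B = X" using X(1) by blast
      then have Xm: "card X \<le> m" using B(3)[OF L] by simp
      show ?thesis
      proof (cases "card X < r")
        case True
        then have "indep X" using small[OF XE] by blast
        then have "card X \<le> k" using rank_ge[OF M XE order_refl] k_def by simp
        moreover have "r \<le> n - r" using n2 by simp
        ultimately show ?thesis by (metis mult.commute mult_le_mono)
      next
        case False
        then have "k \<ge> r - 1" using subr1[OF XE] k_def by simp
        then have kk: "k = r - 1" using kr' by simp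
        have "card X * r \<le> m * r" using Xm by simp
        also have "\<dots> \<le> (r-1)*(n-r)" using key by (simp add: mult.commute)
        finally show ?thesis using kk by (simp add: mult.commute)
      qed
    qed
    then show "card X * r \<le> (n - r) * rank indep X \<and> rank indep X \<ge> 1" using k1 k_def by simp
  qed
  have rdel: "\<And>X. X \<subseteq> E - B \<Longrightarrow> beta (del_indep E indep B) X = beta indep X"
    unfolding beta_def by (simp add: rank_del)
  have bnd2: "\<And>X. X \<subseteq> E - B \<Longrightarrow> X \<noteq> {} \<Longrightarrow> beta indep X \<le> beta indep (E - B)"
  proof -
    fix X assume X: "X \<subseteq> E - B" "X \<noteq> {}"
    from bnd[OF X] have h: "card X * r \<le> (n-r) * rank indep X" "rank indep X \<ge> 1" by auto
    have p: "real (rank indep X) > 0" "real r > 0" using h(2) r3 by auto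
    have "real (card X * r) \<le> real ((n - r) * rank indep X)" using h(1) by (simp only: of_nat_le_iff)
    then have "real (card X) * real r \<le> real (n - r) * real (rank indep X)" by simp
    then have "real (card X) \<le> real (n - r) * real (rank indep X) / real r"
      unfolding pos_le_divide_eq[OF p(2)] .
    also have "\<dots> = real (n - r) / real r * real (rank indep X)" by simp
    finally have q: "real (card X) / real (rank indep X) \<le> real (n - r) / real r"
      unfolding pos_divide_le_eq[OF p(1)] .
    have "beta indep X = ereal (real (card X) / real (rank indep X))" using h(2) unfolding beta_def by simp
    moreover have "beta indep (E - B) = ereal (real (n - r) / real r)" using rEB cEB r3 unfolding beta_def by simp
    ultimately show "beta indep X \<le> beta indep (E - B)" using q by simp
  qed
  have EBne: "E - B \<noteq> {}"
  proof
    assume "E - B = {}"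
    then have "card (E - B) = 0" by (simp only: card.empty)
    then show False using cEB n2 by simp
  qed
  show ?thesis
  proof (intro exI[of _ B] conjI basisB)
    show "rank (del_indep E indep B) (E - B) = rank indep E" using rank_del[of "E - B" E B indep] rEB r_def by simp
    show "gamma (E - B) (del_indep E indep B) = beta (del_indep E indep B) (E - B)"
      unfolding gamma_def
    proof (rule Max_eqI)
      show "finite (beta (del_indep E indep B) ` {X. X \<subseteq> E - B \<and> X \<noteq> {}})"
        by (rule finite_imageI, rule finite_subset[of _ "Pow E"]) (use finE in auto)
      show "beta (del_indep E indep B) (E - B) \<in> beta (del_indep E indep B) ` {X. X \<subseteq> E - B \<and> X \<noteq> {}}"
        using EBne by blast
      fix y assume "y \<in> beta (del_indep E indep B) ` {X. X \<subseteq> E - B \<and> X \<noteq> {}}"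
      then obtain X where X: "X \<subseteq> E - B" "X \<noteq> {}" "y = beta (del_indep E indep B) X" by blast
      then show "y \<le> beta (del_indep E indep B) (E - B)" using rdel[OF X(1)] rdel[OF subset_refl] bnd2[OF X(1,2)] by simp
    qed
  qed
qed

end
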